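(* The function $F(x)=\beta_{i_1(x),1}+\sum_{k=2}^{\infty}\Big[\tilde\beta_{i_k(x),k}\prod_{j=1}^{k-1}\tilde p_{i_j(x),j}\Big]$, $x=\Delta^{-\tilde Q}_{i_1(x)i_2(x)\dots}$, is continuous at every point of $[0,1]$.
   Context: Let $(m_n)_{n\ge1}$ be finite nonnegative integers and $\tilde Q=\|q_{i,n}\|$ ($i\in\{0,\dots,m_n\}$) with $q_{i,n}>0$, $\sum_{i}q_{i,n}=1$ for all $n$, and $\prod_n q_{i_n,n}=0$ for every digit sequence $(i_n)$. Put $a_{0,n}=0$, $a_{i,n}=\sum_{l<i}q_{l,n}$; $\Delta^{\tilde Q}_{j_1j_2\dots}=a_{j_1,1}+\sum_{n\ge2}a_{j_n,n}\prod_{l<n}q_{j_l,l}$. For odd $n$: $\tilde q_{i,n}=q_{i,n}$, $\tilde a_{i,n}=a_{i,n}$; for even $n$: $\tilde q_{i,n}=q_{m_n-i,n}$, $\tilde a_{i,n}=a_{m_n-i,n}$. The nega-$\tilde Q$-representation $x=\Delta^{-\tilde Q}_{i_1i_2\dots}$ means $x=\Delta^{\tilde Q}_{i_1[m_2-i_2]i_3[m_4-i_4]\dots}$; every $x\in[0,1]$ has one, and numbers $\Delta^{-\tilde Q}_{i_1\dots i_nm_{n+1}0m_{n+3}0\dots}=\Delta^{-\tilde Q}_{i_1\dots[i_n-1]0m_{n+2}0m_{n+4}\dots}$ ($i_n\ne0$) have two (the value of $F$ is the same for both). Let $P=\|p_{i,n}\|$ have the same shape with $p_{i,n}\in(-1,1)$,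 $\sum_ip_{i,n}=1$, $\prod_n|p_{i_n,n}|=0$ for every digit sequence, $0<\sum_{i<c}p_{i,n}<1$ for $c\in\{1,\dots,m_n\}$. Put $\beta_{0,n}=0$, $\beta_{c,n}=\sum_{i<c}p_{i,n}$; for odd $n$: $\tilde p_{i,n}=p_{i,n}$, $\tilde\beta_{i,n}=\beta_{i,n}$; for even $n$: $\tilde p_{i,n}=p_{m_n-i,n}$, $\tilde\beta_{i,n}=\beta_{m_n-i,n}$. *)

theory Defs
  imports "HOL-Analysis.Analysis"
begin

(* Conventions: positions n are indexed from 1 (index 0 is ignored);
   m n = m_n, q i n = q_{i,n}, p i n = p_{i,n}, digit sequences d :: nat => nat. *)

definition avals :: "(nat \<Rightarrow> nat \<Rightarrow> real) \<Rightarrow> nat \<Rightarrow> nat \<Rightarrow> real" where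
  "avals q i n = (\<Sum>l<i. q l n)"

definition DeltaQ :: "(nat \<Rightarrow> nat \<Rightarrow> real) \<Rightarrow> (nat \<Rightarrow> nat) \<Rightarrow> real" where
  "DeltaQ q j = avals q (j 1) 1
     + (\<Sum>k. avals q (j (k+2)) (k+2) * (\<Prod>l\<in>{1..k+1}. q (j l) l))"

definition valid_digits :: "(nat \<Rightarrow> nat) \<Rightarrow> (nat \<Rightarrow> nat) \<Rightarrow> bool" where
  "valid_digits m d \<longleftrightarrow> (\<forall>n\<ge>1. d n \<le> m n)"

definition tidx :: "(nat \<Rightarrow> nat) \<Rightarrow> nat \<Rightarrow> nat \<Rightarrow> nat" where
  "tidx m i n = (if odd n then i else m n - i)"

definition nega_rep :: "(nat \<Rightarrow> nat) \<Rightarrow> (nat \<Rightarrow> nat \<Rightarrow> real) \<Rightarrow> real \<Rightarrow> (nat \<Rightarrow> nat) \<Rightarrow> bool" where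
  "nega_rep m q x d \<longleftrightarrow> valid_digits m d \<and> x = DeltaQ q (\<lambda>n. tidx m (d n) n)"

definition Fdig :: "(nat \<Rightarrow> nat) \<Rightarrow> (nat \<Rightarrow> nat \<Rightarrow> real) \<Rightarrow> (nat \<Rightarrow> nat) \<Rightarrow> real" where
  "Fdig m p d = avals p (d 1) 1
     + (\<Sum>k. avals p (tidx m (d (k+2)) (k+2)) (k+2)
             * (\<Prod>j\<in>{1..k+1}. p (tidx m (d j) j) j))"

definition Ffun :: "(nat \<Rightarrow> nat) \<Rightarrow> (nat \<Rightarrow> nat \<Rightarrow> real) \<Rightarrow> (nat \<Rightarrow> nat \<Rightarrow> real) \<Rightarrow> real \<Rightarrow> real" where
  "Ffun m q p x = Fdig m p (SOME d. nega_rep m q x d)"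

end

theory Submission
  imports Defs
begin

definition Sg :: "(nat \<Rightarrow> nat \<Rightarrow> real) \<Rightarrow> (nat \<Rightarrow> nat) \<Rightarrow> nat \<Rightarrow> real" where
  "Sg w c N = (\<Sum>k\<in>{1..N}. avals w (c k) k * (\<Prod>l\<in>{1..<k}. w (c l) l))"

definition Pg :: "(nat \<Rightarrow> nat \<Rightarrow> real) \<Rightarrow> (nat \<Rightarrow> nat) \<Rightarrow> nat \<Rightarrow> real" where
  "Pg w c N = (\<Prod>l\<in>{1..N}. w (c l) l)"

lemma Sg_0[simp]: "Sg w c 0 = 0" by (simp add: Sg_def)
lemma Pg_0[simp]: "Pg w c 0 = 1" by (simp add: Pg_def)

lemma Pg_Suc: "Pg w c (Suc N) = Pg w c N * w (c (Suc N)) (Suc N)"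
  by (simp add: Pg_def prod.cl_ivl_Suc)

lemma Sg_Suc: "Sg w c (Suc N) = Sg w c N + avals w (c (Suc N)) (Suc N) * Pg w c N"
  by (simp add: Sg_def Pg_def sum.cl_ivl_Suc atLeastLessThanSuc_atLeastAtMost)

lemma avals_Suc: "avals w (Suc i) n = avals w i n + w i n"
  by (simp add: avals_def)

lemma avals_0[simp]: "avals w 0 n = 0" by (simp add: avals_def)

lemma SP_Suc: "Sg w c (Suc N) + Pg w c (Suc N) = Sg w c N + avals w (Suc (c (Suc N))) (Suc N) * Pg w c N"
  by (simp add: Sg_Suc Pg_Suc avals_Suc algebra_simps)

lemma Sg_cong: "(\<And>n. n \<in> {1..N} \<Longrightarrow> c n = c' n) \<Longrightarrow> Sg w c N = Sg w c' N"
  unfolding Sg_def by (intro sum.cong refl) (auto intro!: prod.cong)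

lemma Pg_cong: "(\<And>n. n \<in> {1..N} \<Longrightarrow> c n = c' n) \<Longrightarrow> Pg w c N = Pg w c' N"
  unfolding Pg_def by (auto intro!: prod.cong)

lemma Delta_cong: "(\<And>n. n \<ge> 1 \<Longrightarrow> c n = c' n) \<Longrightarrow> DeltaQ w c = DeltaQ w c'"
proof -
  assume h: "\<And>n. n \<ge> 1 \<Longrightarrow> c n = c' n"
  have "(\<lambda>k. avals w (c (k+2)) (k+2) * (\<Prod>l\<in>{1..k+1}. w (c l) l)) =
        (\<lambda>k. avals w (c' (k+2)) (k+2) * (\<Prod>l\<in>{1..k+1}. w (c' l) l))"
    using h by (auto intro!: prod.cong ext)
  then show ?thesis unfolding DeltaQ_def using h[of 1] by simp
qed

lemma conv_in:
  fixes S P a :: real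
  assumes "0 \<le> a" "a \<le> 1"
  shows "min S (S + P) \<le> S + a * P \<and> S + a * P \<le> max S (S + P)"
proof (cases "P \<ge> 0")
  case True
  then have "a * P \<le> P" using assms by (simp add: mult_left_le_one_le)
  moreover have "0 \<le> a * P" using True assms by simp
  ultimately show ?thesis by auto
next
  case False
  have "(1 - a) * P \<le> 0" using False assms by (simp add: mult_nonneg_nonpos)
  then have "P \<le> a * P" by (simp add: algebra_simps)
  moreover have "a * P \<le> 0" using False assms by (simp add: mult_nonneg_nonpos)
  ultimately show ?thesis by auto
qed

locale wts =
  fixes m :: "nat \<Rightarrow> nat" and w :: "nat \<Rightarrow> nat \<Rightarrow> real"
  assumes wsum: "\<And>n. n \<ge> 1 \<Longrightarrow> (\<Sum>i\<le>m n. w i n) = 1"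
    and abnd: "\<And>n c. n \<ge> 1 \<Longrightarrow> c \<le> Suc (m n) \<Longrightarrow> 0 \<le> avals w c n \<and> avals w c n \<le> 1"
    and wprod: "\<And>c. valid_digits m c \<Longrightarrow> Pg w c \<longlonglongrightarrow> 0"
begin

definition lo where "lo c N = min (Sg w c N) (Sg w c N + Pg w c N)"
definition hi where "hi c N = max (Sg w c N) (Sg w c N + Pg w c N)"

lemma avals_top: "n \<ge> 1 \<Longrightarrow> avals w (Suc (m n)) n = 1"
  using wsum by (simp add: avals_def lessThan_Suc_atMost)

lemma step_bounds:
  assumes "valid_digits m c"
  shows "lo c N \<le> lo c (Suc N) \<and> hi c (Suc N) \<le> hi c N"
proof -
  have v: "c (Suc N) \<le> m (Suc N)" using assms by (simp add: valid_digits_def)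
  have a1: "0 \<le> avals w (c (Suc N)) (Suc N) \<and> avals w (c (Suc N)) (Suc N) \<le> 1"
    using abnd[of "Suc N" "c (Suc N)"] v by simp
  have a2: "0 \<le> avals w (Suc (c (Suc N))) (Suc N) \<and> avals w (Suc (c (Suc N))) (Suc N) \<le> 1"
    using abnd[of "Suc N" "Suc (c (Suc N))"] v by simp
  from conv_in[of "avals w (c (Suc N)) (Suc N)" "Sg w c N" "Pg w c N"] a1
  have 1: "lo c N \<le> Sg w c (Suc N) \<and> Sg w c (Suc N) \<le> hi c N"
    by (simp add: lo_def hi_def Sg_Suc mult.commute)
  from conv_in[of "avals w (Suc (c (Suc N))) (Suc N)" "Sg w c N" "Pg w c N"] a2
  have 2: "lo c N \<le> Sg w c (Suc N) + Pg w c (Suc N) \<and> Sg w c (Suc N) + Pg w c (Suc N) \<le> hi c N"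
    by (simp add: lo_def hi_def SP_Suc mult.commute)
  from 1 2 show ?thesis by (simp add: lo_def hi_def)
qed

lemma lo_inc: "valid_digits m c \<Longrightarrow> incseq (lo c)"
  using step_bounds by (simp add: incseq_SucI)

lemma hi_dec: "valid_digits m c \<Longrightarrow> decseq (hi c)"
  using step_bounds by (simp add: decseq_SucI)

lemma hi_lo: "hi c N - lo c N = \<bar>Pg w c N\<bar>"
  by (simp add: hi_def lo_def)

lemma lo_le_hi: "lo c N \<le> hi c N" by (simp add: hi_def lo_def)

lemma conv:
  assumes v: "valid_digits m c"
  shows "Sg w c \<longlonglongrightarrow> DeltaQ w c" "lo c N \<le> DeltaQ w c" "DeltaQ w c \<le> hi c N"
proof -
  have inc: "incseq (lo c)" and dec: "decseq (hi c)" using lo_inc hi_dec v by auto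
  have "\<forall>i. lo c i \<le> hi c 0"
    using order_trans[OF lo_le_hi decseqD[OF dec]] by blast
  then obtain L where L: "lo c \<longlonglongrightarrow> L" using incseq_convergent[OF inc] by blast
  have P0: "(\<lambda>N. \<bar>Pg w c N\<bar>) \<longlonglongrightarrow> 0" using wprod[OF v] tendsto_rabs_zero by blast
  have hiL: "hi c \<longlonglongrightarrow> L"
  proof -
    have "(\<lambda>N. lo c N + \<bar>Pg w c N\<bar>) \<longlonglongrightarrow> L + 0" by (intro tendsto_add L P0)
    moreover have "(\<lambda>N. lo c N + \<bar>Pg w c N\<bar>) = hi c" using hi_lo by (auto simp: algebra_simps)
    ultimately show ?thesis by simp
  qed
  have SL: "Sg w c \<longlonglongrightarrow> L"
    by (rule tendsto_sandwich[OF _ _ L hiL]; intro always_eventually allI; simp add: lo_def hi_def)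
  have Lb: "lo c N \<le> L" "L \<le> hi c N" using incseq_le[OF inc L] decseq_ge[OF dec hiL] by auto
  define f where "f k = avals w (c (k+2)) (k+2) * (\<Prod>l\<in>{1..k+1}. w (c l) l)" for k
  have fS: "f k = Sg w c (Suc (Suc k)) - Sg w c (Suc k)" for k
    by (simp add: f_def Sg_Suc Pg_def)
  have "(\<lambda>n. \<Sum>k<n. f k) = (\<lambda>n. Sg w c (Suc n) - Sg w c 1)"
    by (rule ext, simp add: fS sum_lessThan_telescope[of "\<lambda>i. Sg w c (Suc i)"])
  moreover have "(\<lambda>n. Sg w c (Suc n) - Sg w c 1) \<longlonglongrightarrow> L - Sg w c 1"
    by (intro tendsto_diff tendsto_const) (simp add: SL LIMSEQ_Suc)
  ultimately have "f sums (L - Sg w c 1)" by (simp add: sums_def)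
  then have "DeltaQ w c = Sg w c 1 + (L - Sg w c 1)"
    unfolding DeltaQ_def f_def[symmetric] by (simp add: sums_iff Sg_Suc)
  then have DL: "DeltaQ w c = L" by simp
  show "Sg w c \<longlonglongrightarrow> DeltaQ w c" "lo c N \<le> DeltaQ w c" "DeltaQ w c \<le> hi c N"
    using SL Lb DL by auto
qed

lemma bounds01: "valid_digits m c \<Longrightarrow> 0 \<le> DeltaQ w c \<and> DeltaQ w c \<le> 1"
  using conv(2,3)[of c 0] by (simp add: lo_def hi_def)

lemma close:
  assumes "valid_digits m c" "valid_digits m c'" "\<And>n. n \<in> {1..N} \<Longrightarrow> c n = c' n"
  shows "\<bar>DeltaQ w c - DeltaQ w c'\<bar> \<le> \<bar>Pg w c N\<bar>"
proof -
  have "lo c N = lo c' N" "hi c N = hi c' N"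
    using Sg_cong[OF assms(3)] Pg_cong[OF assms(3)] by (auto simp: lo_def hi_def)
  then show ?thesis using conv(2,3)[OF assms(1), of N] conv(2,3)[OF assms(2), of N] hi_lo[of c N]
    by linarith
qed

lemma cont_seq:
  assumes u: "\<And>k. valid_digits m (u k)" and a: "valid_digits m a"
    and ev: "\<And>n. eventually (\<lambda>k. u k n = a n) sequentially"
  shows "(\<lambda>k. DeltaQ w (u k)) \<longlonglongrightarrow> DeltaQ w a"
proof (rule tendstoI)
  fix e :: real assume e: "e > 0"
  have "(\<lambda>N. \<bar>Pg w a N\<bar>) \<longlonglongrightarrow> 0" using wprod[OF a] tendsto_rabs_zero by blast
  from LIMSEQ_D[OF this e] obtain N where N: "\<bar>Pg w a N\<bar> < e" by fastforce
  have "eventually (\<lambda>k. \<forall>n\<in>{1..N}. u k n = a n) sequentially"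
    using ev by (simp add: eventually_ball_finite)
  then show "eventually (\<lambda>k. dist (DeltaQ w (u k)) (DeltaQ w a) < e) sequentially"
  proof (rule eventually_mono)
    fix k assume "\<forall>n\<in>{1..N}. u k n = a n"
    then have "\<bar>DeltaQ w a - DeltaQ w (u k)\<bar> \<le> \<bar>Pg w a N\<bar>"
      using close[OF a u[of k]] by auto
    then show "dist (DeltaQ w (u k)) (DeltaQ w a) < e" using N by (simp add: dist_real_def abs_minus_commute)
  qed
qed

lemma maxtail:
  assumes v: "valid_digits m c" and t: "\<And>k. k > n \<Longrightarrow> c k = m k"
  shows "DeltaQ w c = Sg w c n + Pg w c n"
proof -
  have eq: "Sg w c (M + n) + Pg w c (M + n) = Sg w c n + Pg w c n" for M
  proof (induction M)
    case (Suc M)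
    have e1: "Sg w c (Suc (M + n)) + Pg w c (Suc (M + n)) =
       Sg w c (M+n) + avals w (Suc (c (Suc (M+n)))) (Suc (M+n)) * Pg w c (M+n)"
      by (rule SP_Suc)
    have e2: "c (Suc (M+n)) = m (Suc (M+n))" by (rule t) simp
    have e3: "avals w (Suc (m (Suc (M+n)))) (Suc (M+n)) = 1" by (rule avals_top) simp
    show ?case using Suc.IH unfolding add_Suc e1 e2 e3 by simp
  qed simp
  have A: "(\<lambda>M. Sg w c (M + n)) \<longlonglongrightarrow> DeltaQ w c"
    using conv(1)[OF v] by (rule LIMSEQ_ignore_initial_segment)
  have B: "(\<lambda>M. (Sg w c n + Pg w c n) - Pg w c (M + n)) \<longlonglongrightarrow> (Sg w c n + Pg w c n) - 0"
    using wprod[OF v] by (intro tendsto_diff tendsto_const LIMSEQ_ignore_initial_segment)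
  have C: "(\<lambda>M. (Sg w c n + Pg w c n) - Pg w c (M + n)) = (\<lambda>M. Sg w c (M + n))"
  proof (rule ext)
    fix M show "(Sg w c n + Pg w c n) - Pg w c (M + n) = Sg w c (M + n)" using eq[of M] by linarith
  qed
  from B have "(\<lambda>M. Sg w c (M + n)) \<longlonglongrightarrow> Sg w c n + Pg w c n" unfolding C by simp
  from LIMSEQ_unique[OF A this] show ?thesis .
qed

lemma zerotail:
  assumes v: "valid_digits m c" and t: "\<And>k. k > n \<Longrightarrow> c k = 0"
  shows "DeltaQ w c = Sg w c n"
proof -
  have eq: "Sg w c (M + n) = Sg w c n" for M
  proof (induction M)
    case (Suc M)
    have e2: "c (Suc (M+n)) = 0" by (rule t) simp
    show ?case using Suc.IH unfolding add_Suc Sg_Suc e2 by simp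
  qed simp
  have A: "(\<lambda>M. Sg w c (M + n)) \<longlonglongrightarrow> DeltaQ w c"
    using conv(1)[OF v] by (rule LIMSEQ_ignore_initial_segment)
  have "(\<lambda>M. Sg w c (M + n)) = (\<lambda>M. Sg w c n)" using eq by (rule ext)
  with A have "(\<lambda>M. Sg w c n) \<longlonglongrightarrow> DeltaQ w c" by simp
  then show ?thesis by (simp add: LIMSEQ_const_iff)
qed

end


locale wpos = wts +
  assumes wposi: "\<And>n i. n \<ge> 1 \<Longrightarrow> i \<le> m n \<Longrightarrow> w i n > 0"
begin

lemma Pg_pos: "valid_digits m c \<Longrightarrow> Pg w c N > 0"
  unfolding Pg_def by (rule prod_pos) (auto intro!: wposi simp: valid_digits_def)

lemma lo_eq: "valid_digits m c \<Longrightarrow> lo c N = Sg w c N"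
  using Pg_pos[of c N] by (simp add: lo_def)

lemma hi_eq: "valid_digits m c \<Longrightarrow> hi c N = Sg w c N + Pg w c N"
  using Pg_pos[of c N] by (simp add: hi_def)

lemma avals_mono:
  assumes n: "n \<ge> 1" and ij: "i \<le> j" and j: "j \<le> Suc (m n)"
  shows "avals w i n \<le> avals w j n"
  using ij j
proof (induction j rule: dec_induct)
  case base show ?case by simp
next
  case (step j)
  then have "w j n > 0" using wposi[of n j] n by simp
  then show ?case using step by (simp add: avals_Suc)
qed

lemma avals_strict: "n \<ge> 1 \<Longrightarrow> i < j \<Longrightarrow> j \<le> Suc (m n) \<Longrightarrow> avals w i n < avals w j n"
proof -
  assume n: "n \<ge> 1" and ij: "i < j" and j: "j \<le> Suc (m n)"
  then obtain j' where j': "j = Suc j'" "i \<le> j'" by (cases j) auto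
  have "avals w i n \<le> avals w j' n" using avals_mono[OF n j'(2)] j j' by simp
  moreover have "w j' n > 0" using wposi[of n j'] n j j' by simp
  ultimately show ?thesis using j' by (simp add: avals_Suc)
qed

lemma fiber:
  assumes v: "valid_digits m c" and v': "valid_digits m c'" and n: "n \<ge> 1"
    and agree: "\<And>k. 1 \<le> k \<Longrightarrow> k < n \<Longrightarrow> c k = c' k"
    and lt: "c n < c' n" and eq: "DeltaQ w c = DeltaQ w c'"
  shows "c' n = Suc (c n) \<and> (\<forall>k>n. c k = m k) \<and> (\<forall>k>n. c' k = 0)"
proof -
  obtain n0 where n0: "n = Suc n0" using n by (cases n) auto
  have cn: "c' n \<le> m n" using v' n by (simp add: valid_digits_def)
  have S0: "Sg w c n0 = Sg w c' n0" and P0: "Pg w c n0 = Pg w c' n0"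
    using agree n0 by (auto intro!: Sg_cong Pg_cong)
  have Ppos: "Pg w c n0 > 0" by (rule Pg_pos[OF v])
  define D where "D = DeltaQ w c"
  have up: "D \<le> Sg w c n0 + avals w (Suc (c n)) n * Pg w c n0"
    using conv(3)[OF v, of n] hi_eq[OF v, of n] SP_Suc[of w c n0] n0 D_def by simp
  have low: "Sg w c n0 + avals w (c' n) n * Pg w c n0 \<le> D"
    using conv(2)[OF v', of n] lo_eq[OF v', of n] Sg_Suc[of w c' n0] n0 D_def eq S0 P0 by simp
  have "avals w (c' n) n * Pg w c n0 \<le> avals w (Suc (c n)) n * Pg w c n0" using up low by linarith
  then have ale: "avals w (c' n) n \<le> avals w (Suc (c n)) n" using Ppos by simp
  have cs: "c' n = Suc (c n)"
  proof (rule ccontr)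
    assume "c' n \<noteq> Suc (c n)"
    then have "Suc (c n) < c' n" using lt by simp
    then have "avals w (Suc (c n)) n < avals w (c' n) n" using avals_strict n cn by simp
    then show False using ale by simp
  qed
  have Dhi: "D = hi c n" and Dlo: "D = lo c' n"
    using up low cs conv(3)[OF v, of n] hi_eq[OF v, of n] SP_Suc[of w c n0] n0
      conv(2)[OF v', of n] lo_eq[OF v', of n] Sg_Suc[of w c' n0] D_def eq S0 P0 by auto
  have A: "c k = m k" if k: "k > n" for k
  proof (rule ccontr)
    assume "c k \<noteq> m k"
    moreover have "c k \<le> m k" using v k n unfolding valid_digits_def by simp
    ultimately have ck: "c k < m k" by simp
    obtain k0 where k0: "k = Suc k0" using k by (cases k) auto
    have k1: "k \<ge> 1" using k n by simp
    have "avals w (Suc (c k)) k < avals w (Suc (m k)) k" using avals_strict[OF k1] ck by simp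
    then have "avals w (Suc (c k)) k < 1" using avals_top[OF k1] by simp
    then have "avals w (Suc (c k)) k * Pg w c k0 < Pg w c k0" using Pg_pos[OF v, of k0] by simp
    then have "hi c k < hi c k0" using hi_eq[OF v, of k] hi_eq[OF v, of k0] SP_Suc[of w c k0] k0 by simp
    moreover have "hi c k0 \<le> hi c n" using decseqD[OF hi_dec[OF v]] k0 k by simp
    moreover have "D \<le> hi c k" using conv(3)[OF v] D_def by simp
    ultimately show False using Dhi by simp
  qed
  have B: "c' k = 0" if k: "k > n" for k
  proof (rule ccontr)
    assume "c' k \<noteq> 0"
    obtain k0 where k0: "k = Suc k0" using k by (cases k) auto
    have k1: "k \<ge> 1" using k n by simp
    have "c' k \<le> m k" using v' k1 unfolding valid_digits_def by simp
    then have ck: "c' k \<le> Suc (m k)" by simp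
    have "avals w 0 k < avals w (c' k) k" using avals_strict[OF k1, of 0] ck \<open>c' k \<noteq> 0\<close> by simp
    then have "0 < avals w (c' k) k * Pg w c' k0" using Pg_pos[OF v', of k0] by simp
    then have "lo c' k0 < lo c' k" using lo_eq[OF v', of k] lo_eq[OF v', of k0] Sg_Suc[of w c' k0] k0 by simp
    moreover have "lo c' n \<le> lo c' k0" using incseqD[OF lo_inc[OF v']] k0 k by simp
    moreover have "lo c' k \<le> D" using conv(2)[OF v'] D_def eq by simp
    ultimately show False using Dlo by simp
  qed
  show ?thesis using cs A B by auto
qed

end

context wts
begin

lemma adjacent:
  assumes v: "valid_digits m c" and v': "valid_digits m c'" and n: "n \<ge> 1"
    and agree: "\<And>k. 1 \<le> k \<Longrightarrow> k < n \<Longrightarrow> c k = c' k"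
    and cs: "c' n = Suc (c n)" and A: "\<And>k. k > n \<Longrightarrow> c k = m k" and B: "\<And>k. k > n \<Longrightarrow> c' k = 0"
  shows "DeltaQ w c = DeltaQ w c'"
proof -
  obtain n0 where n0: "n = Suc n0" using n by (cases n) auto
  have S0: "Sg w c n0 = Sg w c' n0" and P0: "Pg w c n0 = Pg w c' n0"
    using agree n0 by (auto intro!: Sg_cong Pg_cong)
  have "DeltaQ w c = Sg w c n + Pg w c n" by (rule maxtail[OF v A])
  also have "\<dots> = Sg w c n0 + avals w (Suc (c n)) n * Pg w c n0" using SP_Suc[of w c n0] n0 by simp
  also have "\<dots> = Sg w c' n" using Sg_Suc[of w c' n0] n0 S0 P0 cs by simp
  also have "\<dots> = DeltaQ w c'" by (rule zerotail[OF v' B, symmetric])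
  finally show ?thesis .
qed

end

lemma fiber_full:
  assumes Q: "wpos m q" and P: "wts m p"
    and v: "valid_digits m c" and v': "valid_digits m c'" and eq: "DeltaQ q c = DeltaQ q c'"
  shows "DeltaQ p c = DeltaQ p c'"
proof (cases "\<forall>n\<ge>1. c n = c' n")
  case True then show ?thesis by (intro Delta_cong) auto
next
  case False
  define n where "n = (LEAST n. n \<ge> 1 \<and> c n \<noteq> c' n)"
  have nP: "n \<ge> 1 \<and> c n \<noteq> c' n" using False unfolding n_def by (metis (mono_tags, lifting) LeastI)
  have agree: "c k = c' k" if "1 \<le> k" "k < n" for k
    using not_less_Least[of k "\<lambda>n. n \<ge> 1 \<and> c n \<noteq> c' n"] that n_def by blast
  show ?thesis
  proof (cases "c n < c' n")
    case True
    from wpos.fiber[OF Q v v' _ agree True eq] nP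
    have "c' n = Suc (c n) \<and> (\<forall>k>n. c k = m k) \<and> (\<forall>k>n. c' k = 0)" by auto
    then show ?thesis using wts.adjacent[OF P v v' _ agree] nP by auto
  next
    case False
    then have lt: "c' n < c n" using nP by simp
    have agree': "c' k = c k" if "1 \<le> k" "k < n" for k using agree that by simp
    from wpos.fiber[OF Q v' v _ agree' lt eq[symmetric]] nP
    have "c n = Suc (c' n) \<and> (\<forall>k>n. c' k = m k) \<and> (\<forall>k>n. c k = 0)" by auto
    then show ?thesis using wts.adjacent[OF P v' v _ agree'] nP by auto
  qed
qed


definition gdig :: "(nat \<Rightarrow> nat) \<Rightarrow> (nat \<Rightarrow> nat \<Rightarrow> real) \<Rightarrow> real \<Rightarrow> nat \<Rightarrow> real \<Rightarrow> real \<Rightarrow> nat" where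
  "gdig m w x n L P = (GREATEST i. i \<le> m n \<and> L + P * avals w i n \<le> x)"

primrec gst :: "(nat \<Rightarrow> nat) \<Rightarrow> (nat \<Rightarrow> nat \<Rightarrow> real) \<Rightarrow> real \<Rightarrow> nat \<Rightarrow> real \<times> real" where
  "gst m w x 0 = (0, 1)"
| "gst m w x (Suc n) =
     (fst (gst m w x n) + snd (gst m w x n) * avals w (gdig m w x (Suc n) (fst (gst m w x n)) (snd (gst m w x n))) (Suc n),
      snd (gst m w x n) * w (gdig m w x (Suc n) (fst (gst m w x n)) (snd (gst m w x n))) (Suc n))"

definition gc :: "(nat \<Rightarrow> nat) \<Rightarrow> (nat \<Rightarrow> nat \<Rightarrow> real) \<Rightarrow> real \<Rightarrow> nat \<Rightarrow> nat" where
  "gc m w x n = (case n of 0 \<Rightarrow> 0 | Suc k \<Rightarrow> gdig m w x (Suc k) (fst (gst m w x k)) (snd (gst m w x k)))"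

context wts
begin

lemma gstep:
  assumes c: "c = gc m w x" and g: "gst m w x n = (Sg w c n, Pg w c n)"
    and l: "Sg w c n \<le> x" and u: "x \<le> Sg w c n + Pg w c n"
  shows "gst m w x (Suc n) = (Sg w c (Suc n), Pg w c (Suc n)) \<and> Sg w c (Suc n) \<le> x
     \<and> x \<le> Sg w c (Suc n) + Pg w c (Suc n) \<and> c (Suc n) \<le> m (Suc n)"
proof -
  define L where "L = Sg w c n"
  define P where "P = Pg w c n"
  define Pr where "Pr i \<longleftrightarrow> i \<le> m (Suc n) \<and> L + P * avals w i (Suc n) \<le> x" for i
  have ci: "c (Suc n) = (GREATEST i. Pr i)"
    using g by (simp add: c gc_def gdig_def Pr_def L_def P_def)
  define i where "i = c (Suc n)"
  have bd: "\<And>y. Pr y \<Longrightarrow> y \<le> m (Suc n)" by (simp add: Pr_def)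
  have P0: "Pr 0" using l by (simp add: Pr_def L_def)
  have Pi: "Pr i" unfolding i_def ci using GreatestI_nat[of Pr 0 "m (Suc n)"] P0 bd by blast
  have mx: "y \<le> i" if "Pr y" for y unfolding i_def ci
    using Greatest_le_nat[of Pr y "m (Suc n)"] that bd by blast
  have g1: "gst m w x (Suc n) = (Sg w c (Suc n), Pg w c (Suc n))"
    using g ci by (simp add: Sg_Suc Pg_Suc c gc_def gdig_def Pr_def L_def P_def algebra_simps)
  have l1: "Sg w c (Suc n) \<le> x" using Pi by (simp add: Sg_Suc Pr_def L_def P_def i_def mult.commute)
  have u1: "x \<le> Sg w c (Suc n) + Pg w c (Suc n)"
  proof (cases "i = m (Suc n)")
    case True
    then show ?thesis using u avals_top[of "Suc n"] SP_Suc[of w c n] by (simp add: i_def)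
  next
    case False
    then have "Suc i \<le> m (Suc n)" using Pi by (simp add: Pr_def)
    then have "\<not> (L + P * avals w (Suc i) (Suc n) \<le> x)" using mx[of "Suc i"] by (auto simp: Pr_def)
    then show ?thesis using SP_Suc[of w c n] by (simp add: i_def L_def P_def mult.commute)
  qed
  show ?thesis using g1 l1 u1 Pi by (simp add: Pr_def i_def)
qed

lemma greedy_inv:
  assumes x: "0 \<le> x" "x \<le> 1"
  shows "gst m w x n = (Sg w (gc m w x) n, Pg w (gc m w x) n) \<and> Sg w (gc m w x) n \<le> x
     \<and> x \<le> Sg w (gc m w x) n + Pg w (gc m w x) n"
proof (induction n)
  case 0 then show ?case using x by simp
next
  case (Suc n) then show ?case using gstep[OF refl] by blast
qed

lemma exists_rep:
  assumes x: "0 \<le> x" "x \<le> 1"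
  shows "\<exists>c. valid_digits m c \<and> DeltaQ w c = x"
proof -
  define c where "c = gc m w x"
  have inv: "\<And>n. gst m w x n = (Sg w c n, Pg w c n) \<and> Sg w c n \<le> x \<and> x \<le> Sg w c n + Pg w c n"
    using greedy_inv[OF x] c_def by blast
  have v: "valid_digits m c" unfolding valid_digits_def
  proof (intro allI impI)
    fix n :: nat assume "n \<ge> 1"
    then obtain k where k: "n = Suc k" by (cases n) auto
    show "c n \<le> m n" using gstep[OF c_def] inv[of k] k by blast
  qed
  have b: "\<bar>x - DeltaQ w c\<bar> \<le> \<bar>Pg w c N\<bar>" for N
    using conv(2,3)[OF v, of N] inv[of N] hi_lo[of c N] unfolding lo_def hi_def by auto
  have "(\<lambda>N. \<bar>Pg w c N\<bar>) \<longlonglongrightarrow> 0" using wprod[OF v] tendsto_rabs_zero by blast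
  then have "\<bar>x - DeltaQ w c\<bar> \<le> 0" using LIMSEQ_le_const[of _ 0 "\<bar>x - DeltaQ w c\<bar>"] b by blast
  then show ?thesis using v by auto
qed

lemma cont_K: "continuous_on {c. \<forall>n. c n \<le> m n} (DeltaQ w)"
  unfolding continuous_on_def
proof (intro ballI)
  fix a :: "nat \<Rightarrow> nat" assume a: "a \<in> {c. \<forall>n. c n \<le> m n}"
  show "(DeltaQ w \<longlongrightarrow> DeltaQ w a) (at a within {c. \<forall>n. c n \<le> m n})"
    unfolding tendsto_at_iff_sequentially comp_def
  proof (intro allI impI)
    fix u :: "nat \<Rightarrow> nat \<Rightarrow> nat"
    assume u: "\<forall>i. u i \<in> {c. \<forall>n. c n \<le> m n} - {a}" and lim: "u \<longlonglongrightarrow> a"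
    show "(\<lambda>n. DeltaQ w (u n)) \<longlonglongrightarrow> DeltaQ w a"
    proof (rule cont_seq)
      show "valid_digits m (u k)" for k using u by (simp add: valid_digits_def)
      show "valid_digits m a" using a by (simp add: valid_digits_def)
      fix n
      have "(\<lambda>k. u k n) \<longlonglongrightarrow> a n"
        by (rule continuous_on_tendsto_compose[OF continuous_on_product_coordinates lim]) auto
      then have "eventually (\<lambda>k. u k n \<in> {a n}) sequentially"
        by (rule topological_tendstoD) (auto intro: open_discrete)
      then show "eventually (\<lambda>k. u k n = a n) sequentially" by simp
    qed
  qed
qed

end

lemma tidx_tidx: "i \<le> m n \<Longrightarrow> tidx m (tidx m i n) n = i"
  by (simp add: tidx_def)

lemma tidx_le: "i \<le> m n \<Longrightarrow> tidx m i n \<le> m n"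
  by (simp add: tidx_def)

lemma Fdig_eq: "Fdig m p d = DeltaQ p (\<lambda>n. tidx m (d n) n)"
proof -
  have t: "tidx m (d 1) 1 = d 1" by (simp add: tidx_def)
  show ?thesis unfolding Fdig_def DeltaQ_def t ..
qed

theorem mainTheorem3:
  fixes m :: "nat \<Rightarrow> nat" and q p :: "nat \<Rightarrow> nat \<Rightarrow> real"
  assumes q_pos: "\<And>n i. n \<ge> 1 \<Longrightarrow> i \<le> m n \<Longrightarrow> q i n > 0"
    and q_sum: "\<And>n. n \<ge> 1 \<Longrightarrow> (\<Sum>i\<le>m n. q i n) = 1"
    and q_prod: "\<And>d. valid_digits m d \<Longrightarrow> (\<lambda>N. \<Prod>n\<in>{1..N}. q (d n) n) \<longlonglongrightarrow> 0"
    and p_bnd: "\<And>n i. n \<ge> 1 \<Longrightarrow> i \<le> m n \<Longrightarrow> -1 < p i n \<and> p i n < 1"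
    and p_sum: "\<And>n. n \<ge> 1 \<Longrightarrow> (\<Sum>i\<le>m n. p i n) = 1"
    and p_prod: "\<And>d. valid_digits m d \<Longrightarrow> (\<lambda>N. \<Prod>n\<in>{1..N}. \<bar>p (d n) n\<bar>) \<longlonglongrightarrow> 0"
    and p_partial: "\<And>n c. n \<ge> 1 \<Longrightarrow> 1 \<le> c \<Longrightarrow> c \<le> m n \<Longrightarrow>
                       0 < (\<Sum>i<c. p i n) \<and> (\<Sum>i<c. p i n) < 1"
  shows "continuous_on {0..1} (Ffun m q p)"
proof -
  have Qw: "wts m q"
  proof
    show "(\<Sum>i\<le>m n. q i n) = 1" if "n \<ge> 1" for n using q_sum that .
    show "valid_digits m c \<Longrightarrow> Pg q c \<longlonglongrightarrow> 0" for c using q_prod unfolding Pg_def .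
    fix n c assume n: "n \<ge> 1" and c: "c \<le> Suc (m n)"
    have nn: "0 \<le> q l n" if "l < Suc (m n)" for l using q_pos[OF n, of l] that by simp
    have "0 \<le> avals q c n" unfolding avals_def using c nn by (intro sum_nonneg) auto
    moreover have "avals q c n \<le> (\<Sum>l<Suc (m n). q l n)"
      unfolding avals_def using c nn by (intro sum_mono2) auto
    ultimately show "0 \<le> avals q c n \<and> avals q c n \<le> 1"
      using q_sum[OF n] by (simp add: lessThan_Suc_atMost)
  qed
  have Qp: "wpos m q"
    by (intro wpos.intro Qw wpos_axioms.intro q_pos)
  interpret Q: wpos m q by (rule Qp)
  have Pw: "wts m p"
  proof
    show "(\<Sum>i\<le>m n. p i n) = 1" if "n \<ge> 1" for n using p_sum that .
    show "Pg p c \<longlonglongrightarrow> 0" if "valid_digits m c" for c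
    proof -
      have "(\<lambda>N. \<bar>Pg p c N\<bar>) \<longlonglongrightarrow> 0" using p_prod[OF that] by (simp add: Pg_def abs_prod)
      then show ?thesis by (rule tendsto_rabs_zero_cancel)
    qed
    fix n c assume n: "n \<ge> 1" and c: "c \<le> Suc (m n)"
    show "0 \<le> avals p c n \<and> avals p c n \<le> 1"
    proof (cases "c = 0")
      case True then show ?thesis by simp
    next
      case False
      show ?thesis
      proof (cases "c = Suc (m n)")
        case True then show ?thesis using p_sum[OF n] by (simp add: avals_def lessThan_Suc_atMost)
      next
        case False
        then show ?thesis using p_partial[OF n, of c] \<open>c \<noteq> 0\<close> c by (simp add: avals_def)
      qed
    qed
  qed
  interpret P: wts m p by (rule Pw)
  define r where "r x = (\<lambda>n. tidx m ((SOME d. nega_rep m q x d) n) n)" for x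
  have rep: "valid_digits m (r x) \<and> DeltaQ q (r x) = x \<and> Ffun m q p x = DeltaQ p (r x)"
    if x: "x \<in> {0..1}" for x
  proof -
    obtain c where c: "valid_digits m c" "DeltaQ q c = x" using Q.exists_rep x by auto
    define d where "d n = tidx m (c n) n" for n
    have "nega_rep m q x d"
      unfolding nega_rep_def
    proof
      show "valid_digits m d" using c(1) by (simp add: valid_digits_def d_def tidx_le)
      show "x = DeltaQ q (\<lambda>n. tidx m (d n) n)"
        using c by (auto simp: d_def tidx_tidx valid_digits_def intro!: Delta_cong)
    qed
    then have nr: "nega_rep m q x (SOME d. nega_rep m q x d)" by (rule someI[where P="nega_rep m q x"])
    define d0 where "d0 = (SOME d. nega_rep m q x d)"
    have rx: "r x = (\<lambda>n. tidx m (d0 n) n)" by (simp add: r_def d0_def)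
    have vd: "valid_digits m d0" and xd: "x = DeltaQ q (\<lambda>n. tidx m (d0 n) n)"
      using nr unfolding d0_def[symmetric] unfolding nega_rep_def by blast+
    have "valid_digits m (r x)" unfolding rx valid_digits_def
    proof (intro allI impI)
      fix n :: nat assume "n \<ge> 1"
      then have "d0 n \<le> m n" using vd unfolding valid_digits_def by blast
      then show "tidx m (d0 n) n \<le> m n" by (rule tidx_le)
    qed
    moreover have "DeltaQ q (r x) = x" using xd rx by simp
    moreover have "Ffun m q p x = DeltaQ p (r x)" unfolding Ffun_def d0_def[symmetric] rx Fdig_eq ..
    ultimately show ?thesis by blast
  qed
  define K where "K = {c :: nat \<Rightarrow> nat. \<forall>n. c n \<le> m n}"
  have vK: "valid_digits m c" if "c \<in> K" for c using that by (simp add: K_def valid_digits_def)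
  have KP: "K = PiE UNIV (\<lambda>n. {..m n})" by (auto simp: K_def PiE_UNIV_domain Pi_iff)
  have "compactin (product_topology (\<lambda>n. euclidean) UNIV) (PiE UNIV (\<lambda>n. {..m n::nat}))"
    by (simp add: compactin_PiE finite_imp_compact)
  then have cK: "compact K" by (simp add: KP euclidean_product_topology)
  define h where "h c = (DeltaQ q c, DeltaQ p c)" for c
  have ch: "continuous_on K h"
    unfolding h_def K_def by (intro continuous_on_Pair Q.cont_K P.cont_K)
  have cl: "closed (h ` K)" by (intro compact_imp_closed compact_continuous_image ch cK)
  have geq: "(\<lambda>x. (x, Ffun m q p x)) ` {0..1} = h ` K"
  proof
    show "(\<lambda>x. (x, Ffun m q p x)) ` {0..1} \<subseteq> h ` K"
    proof
      fix y assume "y \<in> (\<lambda>x. (x, Ffun m q p x)) ` {0..1}"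
      then obtain x where x: "x \<in> {0..1}" and y: "y = (x, Ffun m q p x)" by auto
      define c where "c = (r x)(0 := 0)"
      have r1: "valid_digits m (r x)" and r2: "DeltaQ q (r x) = x" and r3: "Ffun m q p x = DeltaQ p (r x)"
        using rep[OF x] by blast+
      have cK: "c \<in> K" unfolding K_def
      proof (intro CollectI allI)
        fix n show "c n \<le> m n"
        proof (cases "n = 0")
          case True then show ?thesis by (simp add: c_def)
        next
          case False then show ?thesis using r1 unfolding valid_digits_def c_def by simp
        qed
      qed
      have e1: "DeltaQ q c = DeltaQ q (r x)" and e2: "DeltaQ p c = DeltaQ p (r x)"
        by (rule Delta_cong, simp add: c_def)+
      have "y = h c" unfolding h_def y e1 e2 r2 r3 ..
      then show "y \<in> h ` K" using cK by blast
    qed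
  next
    show "h ` K \<subseteq> (\<lambda>x. (x, Ffun m q p x)) ` {0..1}"
    proof
      fix y assume "y \<in> h ` K"
      then obtain c where c: "c \<in> K" and y: "y = h c" by auto
      define x where "x = DeltaQ q c"
      have x: "x \<in> {0..1}" using Q.bounds01[OF vK[OF c]] by (simp add: x_def)
      have r1: "valid_digits m (r x)" and r2: "DeltaQ q (r x) = x" and r3: "Ffun m q p x = DeltaQ p (r x)"
        using rep[OF x] by blast+
      have "DeltaQ q (r x) = DeltaQ q c" using r2 x_def by simp
      from fiber_full[OF Qp Pw r1 vK[OF c] this]
      have "DeltaQ p (r x) = DeltaQ p c" .
      then have "y = (x, Ffun m q p x)" unfolding y h_def x_def[symmetric] r3 by simp
      then show "y \<in> (\<lambda>x. (x, Ffun m q p x)) ` {0..1}" using x by blast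
    qed
  qed
  show ?thesis
  proof (rule continuous_from_closed_graph[of "{0..1::real}"])
    show "compact {0..1::real}" by simp
    show "Ffun m q p \<in> {0..1} \<rightarrow> {0..1}"
    proof
      fix x :: real assume x: "x \<in> {0..1}"
      have r1: "valid_digits m (r x)" and r3: "Ffun m q p x = DeltaQ p (r x)"
        using rep[OF x] by blast+
      show "Ffun m q p x \<in> {0..1}" using P.bounds01[OF r1] r3 by simp
    qed
    show "closed ((\<lambda>x. (x, Ffun m q p x)) ` {0..1})" using geq cl by simp
  qed
qed

end
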